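(* Let $\mathcal I_{CAS}=\langle\mathcal I,\chi\rangle$ be a CAS-model of a DL-Lite$_R$ DKB $\mathcal K$ such that $\mathit{uni}_{\mathcal K}(\mathcal I_{CAS})=\{e_1,\dots,e_m\}$. Let $c_1,\dots,c_m$ be fresh individual names and $A$ a fresh concept name. Then $\mathcal I'_{CAS}=\langle\mathcal I',\chi\rangle$, where $\mathcal I'$ agrees with $\mathcal I$ except that $c_i^{\mathcal I'}=e_i$ for $i=1,\dots,m$ and $A^{\mathcal I'}=\{e_1,\dots,e_m\}$, is a CAS-model of $\mathcal K'=\mathcal K\cup\{A(c_1),\dots,A(c_m)\}$.
   Context: DL-Lite$_R$: pairwise disjoint countably infinite sets $\mathrm{NC}$, $\mathrm{NR}$, $\mathrm{NI}$; a role is $R$ or $R^-$; concepts $C ::= A\mid\exists R$ (left), $D ::= A\mid\neg C\mid\exists R$ (right). Axioms: $C\sqsubseteq D$, $S\sqsubseteq R$, $\mathrm{Dis}(R,S)$, $\mathrm{Inv}(R,S)$, $\mathrm{Irr}(R)$ (no reflexivity), assertions $D(a)$, $R(a,b)$, usual semantics. Standard name assumption: an infinite set $\mathrm{NI}_S\subseteq\mathrm{NI}$ of standard names is the domain of every interpretation, $c^{\mathcal I}=c$ for $c\in\mathrm{NI}_S$. Axioms are identified with universal first-order sentences $\forall\vec x\,\phi_\alpha(\vec x)$ via the standard translation with right-hand existentials Skolemized; $\alpha(\vec e):=\phi_\alpha(\vec e)$. A DKB $\mathcal K$ is a finite set of DL-Lite$_R$ axioms and defeasible axioms $\mathrm D(\alpha)$;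 $N_{\mathcal K}$ its individuals. A clashing assumption is a pair $\langle\alpha,\vec e\rangle$ with $\alpha(\vec e)$ an instantiation. $\langle\mathcal I,\chi\rangle$ ($\chi$ a set of clashing assumptions) is a CAS-model of $\mathcal K$ if $\mathcal I$ satisfies the non-defeasible axioms of $\mathcal K$ and $\mathcal I\models\phi_\alpha(\vec d)$ for all $\mathrm D(\alpha)\in\mathcal K$ and tuples $\vec d$ with $\langle\alpha,\vec d\rangle\notin\chi$. $\mathit{uni}_{\mathcal K}(\langle\mathcal I,\chi\rangle)=\{e\mid e \text{ occurs in some }\langle\alpha,\vec e\rangle\in\chi\}\setminus\{c^{\mathcal I}\mid c\in N_{\mathcal K}\}$ (elements in clashing assumptions not named by $\mathcal K$). *)

theory Defs
  imports Main
begin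

text \<open>'c: concept names (NC), 'r: role names (NR), 'n: individual names (NI).\<close>

datatype 'r role = Role 'r | RInv 'r

datatype ('c, 'r) lconcept = LAtom 'c | LExists "'r role"

datatype ('c, 'r) rconcept = RAtom 'c | RNeg "('c, 'r) lconcept" | RExists "'r role"

datatype ('c, 'r, 'n) axiom =
    CIncl "('c, 'r) lconcept" "('c, 'r) rconcept"
  | RIncl "'r role" "'r role"
  | DisAx "'r role" "'r role"
  | InvAx "'r role" "'r role"
  | IrrAx "'r role"
  | CAssert "('c, 'r) rconcept" 'n
  | RAssert "'r role" 'n 'n

datatype ('c, 'r, 'n) daxiom = Strict "('c, 'r, 'n) axiom" | Defeasible "('c, 'r, 'n) axiom"

type_synonym ('c, 'r, 'n) dkb = "('c, 'r, 'n) daxiom set"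

text \<open>The domain is the set NIS of standard names; standard names denote themselves.\<close>

record ('c, 'r, 'n) interp =
  conc :: "'c \<Rightarrow> 'n set"
  rol  :: "'r \<Rightarrow> ('n \<times> 'n) set"
  ind  :: "'n \<Rightarrow> 'n"

definition is_interp :: "'n set \<Rightarrow> ('c, 'r, 'n) interp \<Rightarrow> bool" where
  "is_interp NIS I \<longleftrightarrow>
     (\<forall>A. conc I A \<subseteq> NIS) \<and> (\<forall>R. rol I R \<subseteq> NIS \<times> NIS) \<and>
     (\<forall>a. ind I a \<in> NIS) \<and> (\<forall>a\<in>NIS. ind I a = a)"

fun role_ext :: "('c, 'r, 'n) interp \<Rightarrow> 'r role \<Rightarrow> ('n \<times> 'n) set" where
  "role_ext I (Role R) = rol I R"
| "role_ext I (RInv R) = (rol I R)\<inverse>"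

fun lc_ext :: "('c, 'r, 'n) interp \<Rightarrow> ('c, 'r) lconcept \<Rightarrow> 'n set" where
  "lc_ext I (LAtom A) = conc I A"
| "lc_ext I (LExists R) = Domain (role_ext I R)"

fun rc_ext :: "'n set \<Rightarrow> ('c, 'r, 'n) interp \<Rightarrow> ('c, 'r) rconcept \<Rightarrow> 'n set" where
  "rc_ext NIS I (RAtom A) = conc I A"
| "rc_ext NIS I (RNeg C) = NIS - lc_ext I C"
| "rc_ext NIS I (RExists R) = Domain (role_ext I R)"

text \<open>Number of universally quantified variables of the standard translation.\<close>
fun arity :: "('c, 'r, 'n) axiom \<Rightarrow> nat" where
  "arity (CIncl C D) = 1"
| "arity (RIncl S R) = 2"
| "arity (DisAx R S) = 2"
| "arity (InvAx R S) = 2"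
| "arity (IrrAx R) = 1"
| "arity (CAssert D a) = 0"
| "arity (RAssert R a b) = 0"

text \<open>inst NIS I alpha ds: the interpretation satisfies the instantiation \<alpha>(ds),
  i.e. I \<Turnstile> \<phi>_\<alpha>(ds).  (Skolemized right-hand existentials are read existentially per element.)\<close>
fun inst :: "'n set \<Rightarrow> ('c, 'r, 'n) interp \<Rightarrow> ('c, 'r, 'n) axiom \<Rightarrow> 'n list \<Rightarrow> bool" where
  "inst NIS I (CIncl C D) [x] = (x \<in> lc_ext I C \<longrightarrow> x \<in> rc_ext NIS I D)"
| "inst NIS I (RIncl S R) [x, y] = ((x, y) \<in> role_ext I S \<longrightarrow> (x, y) \<in> role_ext I R)"
| "inst NIS I (DisAx R S) [x, y] = (\<not> ((x, y) \<in> role_ext I R \<and> (x, y) \<in> role_ext I S))"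
| "inst NIS I (InvAx R S) [x, y] = ((x, y) \<in> role_ext I R \<longleftrightarrow> (y, x) \<in> role_ext I S)"
| "inst NIS I (IrrAx R) [x] = ((x, x) \<notin> role_ext I R)"
| "inst NIS I (CAssert D a) [] = (ind I a \<in> rc_ext NIS I D)"
| "inst NIS I (RAssert R a b) [] = ((ind I a, ind I b) \<in> role_ext I R)"
| "inst NIS I _ _ = False"

definition is_tuple :: "'n set \<Rightarrow> ('c, 'r, 'n) axiom \<Rightarrow> 'n list \<Rightarrow> bool" where
  "is_tuple NIS \<alpha> ds \<longleftrightarrow> length ds = arity \<alpha> \<and> set ds \<subseteq> NIS"

definition sat_ax :: "'n set \<Rightarrow> ('c, 'r, 'n) interp \<Rightarrow> ('c, 'r, 'n) axiom \<Rightarrow> bool" where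
  "sat_ax NIS I \<alpha> \<longleftrightarrow> (\<forall>ds. is_tuple NIS \<alpha> ds \<longrightarrow> inst NIS I \<alpha> ds)"

text \<open>A clashing assumption is a pair (\<alpha>, e) with \<alpha>(e) an instantiation.\<close>
definition cas_model ::
  "'n set \<Rightarrow> ('c, 'r, 'n) dkb \<Rightarrow> ('c, 'r, 'n) interp \<Rightarrow> (('c, 'r, 'n) axiom \<times> 'n list) set \<Rightarrow> bool" where
  "cas_model NIS K I \<chi> \<longleftrightarrow>
     is_interp NIS I \<and>
     (\<forall>(\<alpha>, es) \<in> \<chi>. is_tuple NIS \<alpha> es) \<and>
     (\<forall>\<alpha>. Strict \<alpha> \<in> K \<longrightarrow> sat_ax NIS I \<alpha>) \<and>
     (\<forall>\<alpha> ds. Defeasible \<alpha> \<in> K \<longrightarrow> is_tuple NIS \<alpha> ds \<longrightarrow> (\<alpha>, ds) \<notin> \<chi> \<longrightarrow> inst NIS I \<alpha> ds)"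

fun ax_inds :: "('c, 'r, 'n) axiom \<Rightarrow> 'n set" where
  "ax_inds (CAssert D a) = {a}"
| "ax_inds (RAssert R a b) = {a, b}"
| "ax_inds _ = {}"

fun lc_names :: "('c, 'r) lconcept \<Rightarrow> 'c set" where
  "lc_names (LAtom A) = {A}"
| "lc_names (LExists R) = {}"

fun rc_names :: "('c, 'r) rconcept \<Rightarrow> 'c set" where
  "rc_names (RAtom A) = {A}"
| "rc_names (RNeg C) = lc_names C"
| "rc_names (RExists R) = {}"

fun ax_concepts :: "('c, 'r, 'n) axiom \<Rightarrow> 'c set" where
  "ax_concepts (CIncl C D) = lc_names C \<union> rc_names D"
| "ax_concepts (CAssert D a) = rc_names D"
| "ax_concepts _ = {}"

fun dax_ax :: "('c, 'r, 'n) daxiom \<Rightarrow> ('c, 'r, 'n) axiom" where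
  "dax_ax (Strict \<alpha>) = \<alpha>"
| "dax_ax (Defeasible \<alpha>) = \<alpha>"

definition inds_K :: "('c, 'r, 'n) dkb \<Rightarrow> 'n set" where
  "inds_K K = (\<Union>\<beta>\<in>K. ax_inds (dax_ax \<beta>))"

definition concepts_K :: "('c, 'r, 'n) dkb \<Rightarrow> 'c set" where
  "concepts_K K = (\<Union>\<beta>\<in>K. ax_concepts (dax_ax \<beta>))"

definition uni_K ::
  "('c, 'r, 'n) dkb \<Rightarrow> ('c, 'r, 'n) interp \<Rightarrow> (('c, 'r, 'n) axiom \<times> 'n list) set \<Rightarrow> 'n set" where
  "uni_K K I \<chi> = {e. \<exists>\<alpha> ds. (\<alpha>, ds) \<in> \<chi> \<and> e \<in> set ds} - ind I ` inds_K K"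

definition extend_interp ::
  "('c, 'r, 'n) interp \<Rightarrow> 'c \<Rightarrow> 'n list \<Rightarrow> 'n list \<Rightarrow> ('c, 'r, 'n) interp" where
  "extend_interp I A cs es =
     I\<lparr>conc := (conc I)(A := set es),
       ind := (\<lambda>a. case map_of (zip cs es) a of None \<Rightarrow> ind I a | Some e \<Rightarrow> e)\<rparr>"

end

theory Submission
  imports Defs
begin

lemma ext_simps:
  "rol (extend_interp I A cs es) = rol I"
  "conc (extend_interp I A cs es) = (conc I)(A := set es)"
  "ind (extend_interp I A cs es) a = (case map_of (zip cs es) a of None \<Rightarrow> ind I a | Some e \<Rightarrow> e)"
  by (simp_all add: extend_interp_def)

lemma role_ext_same: "role_ext (extend_interp I A cs es) R = role_ext I R"
  by (cases R) (simp_all add: ext_simps)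

lemma lc_ext_same: "A \<notin> lc_names C \<Longrightarrow> lc_ext (extend_interp I A cs es) C = lc_ext I C"
  by (cases C) (auto simp: ext_simps role_ext_same)

lemma rc_ext_same: "A \<notin> rc_names D \<Longrightarrow> rc_ext NIS (extend_interp I A cs es) D = rc_ext NIS I D"
  by (cases D) (auto simp: ext_simps role_ext_same lc_ext_same)

lemma ind_same: "length cs = length es \<Longrightarrow> a \<notin> set cs \<Longrightarrow> ind (extend_interp I A cs es) a = ind I a"
proof -
  assume "length cs = length es" "a \<notin> set cs"
  then have "map_of (zip cs es) a = None"
    by (simp add: map_of_eq_None_iff) (metis map_fst_zip set_map)
  then show ?thesis by (simp add: ext_simps)
qed

lemma inst_same:
  assumes "length cs = length es" "A \<notin> ax_concepts \<alpha>" "ax_inds \<alpha> \<inter> set cs = {}"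
  shows "inst NIS (extend_interp I A cs es) \<alpha> ds = inst NIS I \<alpha> ds"
  using assms
  by (cases "(NIS, I, \<alpha>, ds)" rule: inst.cases)
     (auto simp: role_ext_same lc_ext_same rc_ext_same ind_same)

theorem proposition10:
  fixes NIS :: "'n set" and K :: "('c, 'r, 'n) dkb" and I :: "('c, 'r, 'n) interp"
    and \<chi> :: "(('c, 'r, 'n) axiom \<times> 'n list) set"
    and cs es :: "'n list" and A :: 'c
  assumes "infinite NIS"
    and "finite K"
    and "cas_model NIS K I \<chi>"
    and "set es = uni_K K I \<chi>"
    and "length cs = length es"
    and "distinct cs"
    and "\<forall>c\<in>set cs. c \<notin> inds_K K \<and> c \<notin> NIS"
    and "A \<notin> concepts_K K"
  shows "cas_model NIS (K \<union> (\<lambda>c. Strict (CAssert (RAtom A) c)) ` set cs)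
           (extend_interp I A cs es) \<chi>"
proof -
  let ?I = "extend_interp I A cs es"
  note cm0 = assms(3)[unfolded cas_model_def]
  note cm = cm0[THEN conjunct1] cm0[THEN conjunct2, THEN conjunct1]
    cm0[THEN conjunct2, THEN conjunct2, THEN conjunct1] cm0[THEN conjunct2, THEN conjunct2, THEN conjunct2]
  have esN: "set es \<subseteq> NIS"
  proof
    fix e assume "e \<in> set es"
    then obtain \<alpha> ds where "(\<alpha>, ds) \<in> \<chi>" "e \<in> set ds" using assms(4) unfolding uni_K_def by blast
    with cm(2) show "e \<in> NIS" unfolding is_tuple_def by blast
  qed
  have indI: "ind ?I a \<in> NIS" for a
  proof (cases "map_of (zip cs es) a")
    case None then show ?thesis using cm(1) by (simp add: ext_simps is_interp_def)
  next
    case (Some e) then have "e \<in> set es" by (meson in_set_zipE map_of_SomeD)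
    then show ?thesis using Some esN by (auto simp: ext_simps)
  qed
  have fix_: "ind ?I a = a" if "a \<in> NIS" for a
  proof -
    have "a \<notin> set cs" using that assms(7) by blast
    then have "ind ?I a = ind I a" by (rule ind_same[OF assms(5)])
    also have "ind I a = a" using cm(1) that unfolding is_interp_def by blast
    finally show ?thesis .
  qed
  have "is_interp NIS ?I"
  proof -
    have "\<forall>B. conc ?I B \<subseteq> NIS" using cm(1) esN unfolding is_interp_def by (simp add: ext_simps)
    moreover have "\<forall>R. rol ?I R \<subseteq> NIS \<times> NIS" using cm(1) unfolding is_interp_def by (simp add: ext_simps)
    moreover have "\<forall>a. ind ?I a \<in> NIS" using indI by (intro allI)
    moreover have "\<forall>a\<in>NIS. ind ?I a = a" using fix_ by (intro ballI)
    ultimately show ?thesis unfolding is_interp_def by (intro conjI)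
  qed
  moreover have good: "A \<notin> ax_concepts \<alpha> \<and> ax_inds \<alpha> \<inter> set cs = {}" if "Strict \<alpha> \<in> K \<or> Defeasible \<alpha> \<in> K" for \<alpha>
  proof -
    from that obtain \<beta> where b: "\<beta> \<in> K" "dax_ax \<beta> = \<alpha>"
    proof (elim disjE)
      assume "Strict \<alpha> \<in> K" then show ?thesis using that[of "Strict \<alpha>"] by simp
    next
      assume "Defeasible \<alpha> \<in> K" then show ?thesis using that[of "Defeasible \<alpha>"] by simp
    qed
    have "ax_inds \<alpha> \<subseteq> inds_K K" unfolding inds_K_def
      using b UN_upper[of \<beta> K "\<lambda>b. ax_inds (dax_ax b)"] by simp
    moreover have "ax_concepts \<alpha> \<subseteq> concepts_K K" unfolding concepts_K_def
      using b UN_upper[of \<beta> K "\<lambda>b. ax_concepts (dax_ax b)"] by simp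
    moreover have "\<forall>c\<in>set cs. c \<notin> inds_K K" using assms(7) by simp
    ultimately show ?thesis using assms(8) by blast
  qed
  moreover have S1: "sat_ax NIS ?I \<alpha>" if "Strict \<alpha> \<in> K" for \<alpha>
  proof -
    have "sat_ax NIS I \<alpha>" using cm(3)[rule_format, OF that] .
    have g: "A \<notin> ax_concepts \<alpha>" "ax_inds \<alpha> \<inter> set cs = {}" using good[of \<alpha>] that by simp_all
    note \<open>sat_ax NIS I \<alpha>\<close>
    moreover have "inst NIS ?I \<alpha> ds = inst NIS I \<alpha> ds" for ds
      by (rule inst_same[OF assms(5) g])
    ultimately show ?thesis unfolding sat_ax_def by simp
  qed
  moreover have S2: "sat_ax NIS ?I (CAssert (RAtom A) c)" if "c \<in> set cs" for c
  proof -
    from that obtain i where i: "i < length cs" "cs ! i = c" by (auto simp: in_set_conv_nth)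
    have "map_of (zip cs es) c = Some (es ! i)"
      using i assms(5,6) by (metis map_of_zip_nth)
    then have "ind ?I c = es ! i" by (simp add: ext_simps)
    moreover have "es ! i \<in> set es" using i assms(5) by simp
    ultimately have "inst NIS ?I (CAssert (RAtom A) c) []" by (simp add: ext_simps)
    then show ?thesis unfolding sat_ax_def is_tuple_def by simp
  qed
  moreover have D: "inst NIS ?I \<alpha> ds" if "Defeasible \<alpha> \<in> K" "is_tuple NIS \<alpha> ds" "(\<alpha>, ds) \<notin> \<chi>" for \<alpha> ds
  proof -
    have g: "A \<notin> ax_concepts \<alpha>" "ax_inds \<alpha> \<inter> set cs = {}" using good[of \<alpha>] that by simp_all
    have "inst NIS I \<alpha> ds" using cm(4)[rule_format, OF that] .
    moreover have "inst NIS ?I \<alpha> ds = inst NIS I \<alpha> ds"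
      by (rule inst_same[OF assms(5) g])
    ultimately show ?thesis by simp
  qed
  moreover have F1: "\<forall>\<alpha>. Strict \<alpha> \<in> K \<union> (\<lambda>c. Strict (CAssert (RAtom A) c)) ` set cs \<longrightarrow> sat_ax NIS ?I \<alpha>"
  proof (intro allI impI)
    fix \<alpha> assume "Strict \<alpha> \<in> K \<union> (\<lambda>c. Strict (CAssert (RAtom A) c)) ` set cs"
    then consider "Strict \<alpha> \<in> K" | c where "c \<in> set cs" "\<alpha> = CAssert (RAtom A) c" by auto
    then show "sat_ax NIS ?I \<alpha>" using S1 S2 by cases auto
  qed
  moreover have F2: "\<forall>\<alpha> ds. Defeasible \<alpha> \<in> K \<union> (\<lambda>c. Strict (CAssert (RAtom A) c)) ` set cs \<longrightarrow> is_tuple NIS \<alpha> ds \<longrightarrow> (\<alpha>, ds) \<notin> \<chi> \<longrightarrow> inst NIS ?I \<alpha> ds"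
  proof (intro allI impI)
    fix \<alpha> ds assume "Defeasible \<alpha> \<in> K \<union> (\<lambda>c. Strict (CAssert (RAtom A) c)) ` set cs"
      "is_tuple NIS \<alpha> ds" "(\<alpha>, ds) \<notin> \<chi>"
    moreover then have "Defeasible \<alpha> \<in> K" by auto
    ultimately show "inst NIS ?I \<alpha> ds" using D by simp
  qed
  ultimately show ?thesis unfolding cas_model_def using cm(2) by (intro conjI)
qed

end
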